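(* Let $X$ be a non-empty set, $(Y,\langle\cdot,\cdot\rangle)$ a real inner product space, and let $I:X\to\mathbb{R}$, $\Phi:X\to Y$ and $\mu>0$ be such that the function $x\mapsto I(x)+\mu\|\Phi(x)\|^2$ has a global minimum in $X$. Then at least one of the following assertions holds: (a) for each filtering cover $\mathcal{N}$ of $X$ there exists $A\in\mathcal{N}$ such that $$\sup_{\lambda\in Y}\inf_{x\in A}\big(I(x)+\mu(2\langle\Phi(x),\lambda\rangle-\|\lambda\|^2)\big)<\inf_{x\in A}\sup_{\lambda\in\Phi(A)}\big(I(x)+\mu(2\langle\Phi(x),\lambda\rangle-\|\lambda\|^2)\big);$$ (b) for each global minimum $u$ of $x\mapsto I(x)+\mu\|\Phi(x)\|^2$ one has $$I(u)\leq I(x)+2\mu\big(\langle\Phi(x),\Phi(u)\rangle-\|\Phi(u)\|^2\big)$$ for all $x\in X$.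
   Context: A family $\mathcal{N}$ of non-empty subsets of $X$ is a filtering cover of $X$ if $\bigcup_{A\in\mathcal{N}}A=X$ and for each $A_1,A_2\in\mathcal{N}$ there is $A_3\in\mathcal{N}$ with $A_1\cup A_2\subseteq A_3$. *)

theory Defs
  imports "HOL-Analysis.Analysis"
begin

definition filtering_cover :: "'a set \<Rightarrow> 'a set set \<Rightarrow> bool" where
  "filtering_cover X N \<longleftrightarrow>
     (\<forall>A\<in>N. A \<noteq> {} \<and> A \<subseteq> X) \<and> \<Union>N = X \<and>
     (\<forall>A1\<in>N. \<forall>A2\<in>N. \<exists>A3\<in>N. A1 \<union> A2 \<subseteq> A3)"

end

theory Submission
  imports Defs
begin

lemma key_real:
  fixes \<mu> \<delta> D a n :: real
  assumes mu: "\<mu> > 0" and de: "\<delta> > 0" and D: "D \<ge> 0" and n: "n \<ge> 0"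
    and cs: "a \<le> D * n"
  shows "min (- \<mu> * n\<^sup>2) (- \<mu> * n\<^sup>2 - \<delta> + 2 * \<mu> * a)
         \<le> - min (\<delta>/2) (\<mu> * (\<delta> / (4*\<mu>*D+1))\<^sup>2)"
proof (cases "2 * \<mu> * a \<le> \<delta>/2")
  case True
  have "- \<mu> * n\<^sup>2 \<le> 0" using mu by simp
  then show ?thesis using True by linarith
next
  case False
  let ?K = "4*\<mu>*D+1"
  have K: "?K > 0" using mu D by (simp add: add_nonneg_pos)
  have "\<delta> < 4*\<mu>*a" using False by linarith
  also have "\<dots> \<le> 4*\<mu>*(D*n)" using cs mu by simp
  also have "\<dots> \<le> ?K * n" using n by (simp add: algebra_simps)
  finally have "\<delta> / ?K < n" using K by (simp add: divide_less_eq mult.commute)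
  hence "(\<delta> / ?K)\<^sup>2 \<le> n\<^sup>2" using de K
    by (intro power_mono) auto
  hence "\<mu> * (\<delta> / ?K)\<^sup>2 \<le> \<mu> * n\<^sup>2" using mu by simp
  then show ?thesis by linarith
qed

theorem theorem3p4:
  fixes X :: "'a set" and I :: "'a \<Rightarrow> real" and \<Phi> :: "'a \<Rightarrow> 'b::real_inner"
    and \<mu> :: real
  assumes "X \<noteq> {}" and "\<mu> > 0"
    and "\<exists>u\<in>X. \<forall>x\<in>X. I u + \<mu> * (norm (\<Phi> u))\<^sup>2 \<le> I x + \<mu> * (norm (\<Phi> x))\<^sup>2"
  shows "(\<forall>N. filtering_cover X N \<longrightarrow>
            (\<exists>A\<in>N. (SUP l\<in>(UNIV::'b set). INF x\<in>A.
                        ereal (I x + \<mu> * (2 * inner (\<Phi> x) l - (norm l)\<^sup>2)))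
                    < (INF x\<in>A. SUP l\<in>\<Phi> ` A.
                        ereal (I x + \<mu> * (2 * inner (\<Phi> x) l - (norm l)\<^sup>2)))))
       \<or> (\<forall>u\<in>X. (\<forall>x\<in>X. I u + \<mu> * (norm (\<Phi> u))\<^sup>2 \<le> I x + \<mu> * (norm (\<Phi> x))\<^sup>2) \<longrightarrow>
            (\<forall>x\<in>X. I u \<le> I x + 2 * \<mu> * (inner (\<Phi> x) (\<Phi> u) - (norm (\<Phi> u))\<^sup>2)))"
proof (rule disjCI)
  assume "\<not> (\<forall>u\<in>X. (\<forall>x\<in>X. I u + \<mu> * (norm (\<Phi> u))\<^sup>2 \<le> I x + \<mu> * (norm (\<Phi> x))\<^sup>2) \<longrightarrow>
            (\<forall>x\<in>X. I u \<le> I x + 2 * \<mu> * (inner (\<Phi> x) (\<Phi> u) - (norm (\<Phi> u))\<^sup>2)))"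
  then obtain u x0 where uX: "u \<in> X" and umin: "\<forall>x\<in>X. I u + \<mu> * (norm (\<Phi> u))\<^sup>2 \<le> I x + \<mu> * (norm (\<Phi> x))\<^sup>2"
    and x0X: "x0 \<in> X" and bad: "I u > I x0 + 2 * \<mu> * (inner (\<Phi> x0) (\<Phi> u) - (norm (\<Phi> u))\<^sup>2)"
    by (auto simp: not_le)
  define f where "f x l = I x + \<mu> * (2 * inner (\<Phi> x) l - (norm l)\<^sup>2)" for x l
  define J where "J = I u + \<mu> * (norm (\<Phi> u))\<^sup>2"
  define \<delta> where "\<delta> = I u - (I x0 + 2 * \<mu> * (inner (\<Phi> x0) (\<Phi> u) - (norm (\<Phi> u))\<^sup>2))"
  define d where "d = \<Phi> x0 - \<Phi> u"
  define \<epsilon> where "\<epsilon> = min (\<delta>/2) (\<mu> * (\<delta> / (4*\<mu>*norm d+1))\<^sup>2)"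
  have mu: "\<mu> > 0" using assms by simp
  have de: "\<delta> > 0" using bad by (simp add: \<delta>_def)
  have K: "4*\<mu>*norm d+1 > 0" using mu by (simp add: add_nonneg_pos)
  have eps: "\<epsilon> > 0" unfolding \<epsilon>_def using de mu K by simp
  have fbound: "min (f u l) (f x0 l) \<le> J - \<epsilon>" for l
  proof -
    define h where "h = l - \<Phi> u"
    have l: "l = \<Phi> u + h" by (simp add: h_def)
    have e1: "f u l = J - \<mu> * (norm h)\<^sup>2"
      unfolding f_def J_def l power2_norm_eq_inner
      by (simp add: inner_add_left inner_add_right inner_commute algebra_simps)
    have e2: "f x0 l = J - \<mu> * (norm h)\<^sup>2 - \<delta> + 2 * \<mu> * inner d h"
      unfolding f_def J_def \<delta>_def d_def l power2_norm_eq_inner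
      by (simp add: inner_add_left inner_add_right inner_diff_left inner_commute algebra_simps)
    have cs: "inner d h \<le> norm d * norm h"
      using Cauchy_Schwarz_ineq2[of d h] by simp
    have "min (- \<mu> * (norm h)\<^sup>2) (- \<mu> * (norm h)\<^sup>2 - \<delta> + 2 * \<mu> * inner d h) \<le> - \<epsilon>"
      unfolding \<epsilon>_def by (rule key_real[OF mu de norm_ge_zero norm_ge_zero cs])
    then show ?thesis unfolding e1 e2 by linarith
  qed
  show "\<forall>N. filtering_cover X N \<longrightarrow>
            (\<exists>A\<in>N. (SUP l\<in>(UNIV::'b set). INF x\<in>A.
                        ereal (I x + \<mu> * (2 * inner (\<Phi> x) l - (norm l)\<^sup>2)))
                    < (INF x\<in>A. SUP l\<in>\<Phi> ` A.
                        ereal (I x + \<mu> * (2 * inner (\<Phi> x) l - (norm l)\<^sup>2))))"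
  proof (intro allI impI)
    fix N assume fc: "filtering_cover X N"
    from fc uX obtain A1 where A1: "A1 \<in> N" "u \<in> A1" unfolding filtering_cover_def by blast
    from fc x0X obtain A2 where A2: "A2 \<in> N" "x0 \<in> A2" unfolding filtering_cover_def by blast
    from fc A1 A2 obtain A where A: "A \<in> N" "A1 \<union> A2 \<subseteq> A" unfolding filtering_cover_def by blast
    have AX: "A \<subseteq> X" using fc A unfolding filtering_cover_def by blast
    have uA: "u \<in> A" and x0A: "x0 \<in> A" using A A1 A2 by auto
    have L: "(SUP l\<in>(UNIV::'b set). INF x\<in>A. ereal (f x l)) \<le> ereal (J - \<epsilon>)"
    proof (rule SUP_least)
      fix l :: 'b
      have "(INF x\<in>A. ereal (f x l)) \<le> ereal (f u l)" using uA by (rule INF_lower)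
      moreover have "(INF x\<in>A. ereal (f x l)) \<le> ereal (f x0 l)" using x0A by (rule INF_lower)
      ultimately have "(INF x\<in>A. ereal (f x l)) \<le> ereal (min (f u l) (f x0 l))"
        by (simp add: min_def)
      also have "\<dots> \<le> ereal (J - \<epsilon>)" using fbound[of l] by (simp add: min_def)
      finally show "(INF x\<in>A. ereal (f x l)) \<le> ereal (J - \<epsilon>)" .
    qed
    have R: "ereal J \<le> (INF x\<in>A. SUP l\<in>\<Phi> ` A. ereal (f x l))"
    proof (rule INF_greatest)
      fix x assume xA: "x \<in> A"
      have "f x (\<Phi> x) = I x + \<mu> * (norm (\<Phi> x))\<^sup>2"
        unfolding f_def power2_norm_eq_inner by simp
      hence "J \<le> f x (\<Phi> x)" using umin xA AX unfolding J_def by auto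
      also have "ereal (f x (\<Phi> x)) \<le> (SUP l\<in>\<Phi> ` A. ereal (f x l))"
        using xA by (intro SUP_upper) auto
      finally show "ereal J \<le> (SUP l\<in>\<Phi> ` A. ereal (f x l))" by simp
    qed
    have "ereal (J - \<epsilon>) < ereal J" using eps by simp
    with L R have "(SUP l\<in>(UNIV::'b set). INF x\<in>A. ereal (f x l)) < (INF x\<in>A. SUP l\<in>\<Phi> ` A. ereal (f x l))"
      by (meson order.strict_trans1 order.strict_trans2)
    then show "\<exists>A\<in>N. (SUP l\<in>(UNIV::'b set). INF x\<in>A.
                        ereal (I x + \<mu> * (2 * inner (\<Phi> x) l - (norm l)\<^sup>2)))
                    < (INF x\<in>A. SUP l\<in>\<Phi> ` A.
                        ereal (I x + \<mu> * (2 * inner (\<Phi> x) l - (norm l)\<^sup>2)))"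
      using A(1) unfolding f_def by blast
  qed
qed

end
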